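(* The number of unique configurations of length $n$ is $\Omega(2^n)$.
   Context: For a real sequence $A=(a_1,\dots,a_n)$, a configuration is a sequence $P=(p_1,\dots,p_n)$ with $p_\ell\in\{1,\dots,n-\ell+1\}$ for each $\ell$; $P$ is an output configuration for $A$ if for every $\ell=1,\dots,n$ the sum $a_{p_\ell}+\dots+a_{p_\ell+\ell-1}$ is maximum among all sums of $\ell$ consecutive entries of $A$. A configuration $P$ is unique if there exists $A\in\mathbb{R}^n$ whose only output configuration is $P$. *)

theory Defs
  imports Complex_Main "HOL-Library.Landau_Symbols"
begin

text \<open>A real sequence A = (a_1,...,a_n) is modelled as a function a :: nat => real,
  of which only the values a 1, ..., a n are relevant.
  A configuration P = (p_1,...,p_n) is a list of length n with P ! (l-1) = p_l.\<close>

definition window_sum :: "(nat \<Rightarrow> real) \<Rightarrow> nat \<Rightarrow> nat \<Rightarrow> real" where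
  "window_sum a p l = (\<Sum>i=p..<p+l. a i)"

definition is_config :: "nat \<Rightarrow> nat list \<Rightarrow> bool" where
  "is_config n P \<longleftrightarrow> length P = n \<and> (\<forall>l\<in>{1..n}. P ! (l-1) \<in> {1..n-l+1})"

definition output_config :: "nat \<Rightarrow> (nat \<Rightarrow> real) \<Rightarrow> nat list \<Rightarrow> bool" where
  "output_config n a P \<longleftrightarrow> is_config n P \<and>
     (\<forall>l\<in>{1..n}. \<forall>q\<in>{1..n-l+1}. window_sum a q l \<le> window_sum a (P ! (l-1)) l)"

definition unique_config :: "nat \<Rightarrow> nat list \<Rightarrow> bool" where
  "unique_config n P \<longleftrightarrow> is_config n P \<and>
     (\<exists>a :: nat \<Rightarrow> real. \<forall>Q. output_config n a Q \<longleftrightarrow> Q = P)"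

end

theory Submission
  imports Defs
begin

definition pp :: "nat set \<Rightarrow> nat \<Rightarrow> nat" where
  "pp D k = 1 + card {j\<in>D. k < j}"

definition cfg :: "nat \<Rightarrow> nat set \<Rightarrow> nat list" where
  "cfg n D = map (pp D) [1..<n+1]"

definition aa :: "nat \<Rightarrow> nat set \<Rightarrow> nat \<Rightarrow> real" where
  "aa n D i = real (card {k\<in>{1..n}. pp D k \<le> i \<and> i < pp D k + k})"

lemma pp_split:
  assumes "finite D" "k \<le> l"
  shows "pp D k = pp D l + card {j\<in>D. k < j \<and> j \<le> l}"
proof -
  have "{j\<in>D. k < j} = {j\<in>D. k < j \<and> j \<le> l} \<union> {j\<in>D. l < j}" using assms by auto
  moreover have "card ({j\<in>D. k < j \<and> j \<le> l} \<union> {j\<in>D. l < j}) =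
     card {j\<in>D. k < j \<and> j \<le> l} + card {j\<in>D. l < j}"
    by (rule card_Un_disjoint) (use assms in auto)
  ultimately show ?thesis unfolding pp_def by simp
qed

lemma pp_nested:
  assumes "finite D" "k \<le> l"
  shows "pp D l \<le> pp D k \<and> pp D k + k \<le> pp D l + l"
proof -
  have "card {j\<in>D. k < j \<and> j \<le> l} \<le> card {k<..l}"
    by (rule card_mono) auto
  then have "card {j\<in>D. k < j \<and> j \<le> l} \<le> l - k" by simp
  then show ?thesis using pp_split[OF assms] assms(2) by linarith
qed

lemma pp_bound:
  assumes "D \<subseteq> {2..n}" "l \<in> {1..n}"
  shows "pp D l \<in> {1..n-l+1}"
proof -
  have "card {j\<in>D. l < j} \<le> card {l<..n}"
    by (rule card_mono) (use assms in auto)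
  then show ?thesis unfolding pp_def using assms by auto
qed

lemma pp_step:
  assumes "finite D" "1 \<le> j"
  shows "pp D (j-1) = pp D j + (if j \<in> D then 1 else 0)"
proof -
  have a: "pp D (j-1) = pp D j + card {i\<in>D. j - 1 < i \<and> i \<le> j}"
    by (rule pp_split[OF assms(1) diff_le_self])
  have b: "\<And>i. (j - 1 < i \<and> i \<le> j) = (i = j)" using assms(2) by (cases j) auto
  have c: "{i\<in>D. j - 1 < i \<and> i \<le> j} = (if j \<in> D then {j} else {})"
    unfolding b by auto
  show ?thesis unfolding a c by simp
qed

lemma sum_swap_lt:
  fixes f :: "nat \<Rightarrow> real"
  assumes "finite S" "finite T" "card S = card T" "S \<noteq> T"
    "\<And>x. x \<in> S - T \<Longrightarrow> f x \<le> c" "\<And>y. y \<in> T - S \<Longrightarrow> c + 1 \<le> f y"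
  shows "sum f S < sum f T"
proof -
  have cS: "card S = card (S \<inter> T) + card (S - T)"
    using assms(1) by (metis card_Int_Diff)
  have cT: "card T = card (T \<inter> S) + card (T - S)"
    using assms(2) by (metis card_Int_Diff)
  have eq: "card (S - T) = card (T - S)" using cS cT assms(3) by (simp add: Int_commute)
  have ne: "S - T \<noteq> {}"
  proof
    assume "S - T = {}"
    then have "S \<subseteq> T" by auto
    then have "S = T" using card_subset_eq[OF assms(2)] assms(3) by blast
    then show False using assms(4) by simp
  qed
  then have m: "card (S - T) > 0" using assms(1) by auto
  have s1: "sum f (S - T) \<le> real (card (S - T)) * c"
    using sum_bounded_above[of "S - T" f c] assms(5) by simp
  have s2: "real (card (T - S)) * (c + 1) \<le> sum f (T - S)"
    using sum_bounded_below[of "T - S" "c+1" f] assms(6) by simp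
  have "sum f S = sum f (S \<inter> T) + sum f (S - T)"
    using assms(1) by (metis sum.Int_Diff)
  moreover have "sum f T = sum f (S \<inter> T) + sum f (T - S)"
    using assms(2) by (metis sum.Int_Diff Int_commute)
  moreover have "real (card (S - T)) * c < real (card (T - S)) * (c + 1)"
    using eq m by (simp add: algebra_simps)
  ultimately show ?thesis using s1 s2 by linarith
qed

lemma window_sum_eq: "window_sum a p l = sum a {p..<p+l}"
  unfolding window_sum_def by simp

lemma key:
  assumes D: "D \<subseteq> {2..n}" and l: "l \<in> {1..n}" and q: "q \<in> {1..n-l+1}" and ne: "q \<noteq> pp D l"
  shows "window_sum (aa n D) q l < window_sum (aa n D) (pp D l) l"
proof -
  have fD: "finite D" using D finite_subset by blast
  have pl: "pp D l \<in> {1..n-l+1}" using pp_bound[OF D l] .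
  let ?S = "{q..<q+l}" and ?T = "{pp D l..<pp D l+l}"
  have neq: "?S \<noteq> ?T"
  proof
    assume e: "?S = ?T"
    show False
    proof (cases "q < pp D l")
      case True
      then have "q \<in> ?S" "q \<notin> ?T" using l by auto
      then show False using e by simp
    next
      case False
      then have "pp D l \<in> ?T" "pp D l \<notin> ?S" using l ne by auto
      then show False using e by simp
    qed
  qed
  show ?thesis unfolding window_sum_eq
  proof (rule sum_swap_lt[where c = "real (n - l)"])
    show "card ?S = card ?T" by simp
    show "?S \<noteq> ?T" by (rule neq)
  next
    fix x assume x: "x \<in> ?S - ?T"
    have "{k\<in>{1..n}. pp D k \<le> x \<and> x < pp D k + k} \<subseteq> {l<..n}"
    proof
      fix k assume k: "k \<in> {k\<in>{1..n}. pp D k \<le> x \<and> x < pp D k + k}"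
      have "l < k"
      proof (rule ccontr)
        assume "\<not> l < k"
        then have "k \<le> l" by simp
        from pp_nested[OF fD this] k x show False by auto
      qed
      then show "k \<in> {l<..n}" using k by auto
    qed
    from card_mono[OF _ this] show "aa n D x \<le> real (n - l)"
      unfolding aa_def by simp
  next
    fix y assume y: "y \<in> ?T - ?S"
    have "{l..n} \<subseteq> {k\<in>{1..n}. pp D k \<le> y \<and> y < pp D k + k}"
    proof
      fix k assume k: "k \<in> {l..n}"
      then have "l \<le> k" by simp
      from pp_nested[OF fD this] k y l show "k \<in> {k\<in>{1..n}. pp D k \<le> y \<and> y < pp D k + k}"
        by auto
    qed
    from card_mono[OF _ this] have "card {l..n} \<le> card {k\<in>{1..n}. pp D k \<le> y \<and> y < pp D k + k}"
      by simp
    then show "real (n - l) + 1 \<le> aa n D y" unfolding aa_def using l by simp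
  qed (simp_all)
qed

lemma cfg_is_config:
  assumes D: "D \<subseteq> {2..n}"
  shows "is_config n (cfg n D)"
  unfolding is_config_def cfg_def
proof (intro conjI ballI)
  show "length (map (pp D) [1..<n + 1]) = n" by simp
  fix l assume l: "l \<in> {1..n}"
  then have "map (pp D) [1..<n + 1] ! (l - 1) = pp D l" by (subst nth_map) (auto simp del: upt_Suc)
  then show "map (pp D) [1..<n + 1] ! (l - 1) \<in> {1..n - l + 1}" using pp_bound[OF D l] by simp
qed

lemma cfg_nth: "l \<in> {1..n} \<Longrightarrow> cfg n D ! (l - 1) = pp D l"
  unfolding cfg_def by (subst nth_map) (auto simp del: upt_Suc)

lemma cfg_unique:
  assumes D: "D \<subseteq> {2..n}"
  shows "unique_config n (cfg n D)"
  unfolding unique_config_def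
proof (intro conjI exI allI)
  show "is_config n (cfg n D)" by (rule cfg_is_config[OF D])
  fix Q
  show "output_config n (aa n D) Q \<longleftrightarrow> Q = cfg n D"
  proof
    assume Q: "output_config n (aa n D) Q"
    then have iQ: "is_config n Q" unfolding output_config_def by simp
    show "Q = cfg n D"
    proof (rule nth_equalityI)
      show "length Q = length (cfg n D)" using iQ unfolding is_config_def cfg_def by simp
      fix i assume i: "i < length Q"
      then have il: "Suc i \<in> {1..n}" and li: "length Q = n" using iQ unfolding is_config_def by auto
      have allc: "\<forall>l\<in>{1..n}. Q ! (l-1) \<in> {1..n-l+1}" using iQ unfolding is_config_def by blast
      have qin: "Q ! i \<in> {1..n - Suc i + 1}" using bspec[OF allc il] by simp
      have allQ: "\<forall>l\<in>{1..n}. \<forall>q\<in>{1..n-l+1}. window_sum (aa n D) q l \<le> window_sum (aa n D) (Q!(l-1)) l"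
        using Q unfolding output_config_def by blast
      have "window_sum (aa n D) (pp D (Suc i)) (Suc i) \<le> window_sum (aa n D) (Q ! (Suc i - 1)) (Suc i)"
        using bspec[OF bspec[OF allQ il] pp_bound[OF D il]] .
      then have "window_sum (aa n D) (pp D (Suc i)) (Suc i) \<le> window_sum (aa n D) (Q ! i) (Suc i)" by simp
      then have "Q ! i = pp D (Suc i)"
        using key[OF D il qin] by (cases "Q ! i = pp D (Suc i)") auto
      then show "Q ! i = cfg n D ! i" using cfg_nth[OF il] by simp
    qed
  next
    assume Q: "Q = cfg n D"
    show "output_config n (aa n D) Q"
      unfolding output_config_def Q
    proof (intro conjI ballI)
      show "is_config n (cfg n D)" by (rule cfg_is_config[OF D])
      fix l q assume l: "l \<in> {1..n}" and q: "q \<in> {1..n - l + 1}"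
      show "window_sum (aa n D) q l \<le> window_sum (aa n D) (cfg n D ! (l - 1)) l"
        using key[OF D l q] cfg_nth[OF l] by (cases "q = pp D l") auto
    qed
  qed
qed

lemma cfg_inj: "inj_on (cfg n) (Pow {2..n})"
proof (rule inj_onI)
  fix D D' assume D: "D \<in> Pow {2..n}" and D': "D' \<in> Pow {2..n}" and e: "cfg n D = cfg n D'"
  have fD: "finite D" "finite D'"
    using finite_subset[of D "{2..n}"] finite_subset[of D' "{2..n}"] D D' by auto
  have pe: "pp D k = pp D' k" if "k \<in> {1..n}" for k
    using cfg_nth[OF that, of D] cfg_nth[OF that, of D'] e by simp
  show "D = D'"
  proof (rule set_eqI)
    fix j
    show "j \<in> D \<longleftrightarrow> j \<in> D'"
    proof (cases "j \<in> {2..n}")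
      case True
      then have j0: "2 \<le> j" "j \<le> n" by auto
      then have j1: "j - 1 \<in> {1..n}" and j2: "j \<in> {1..n}" and j3: "1 \<le> j" by (cases j; simp)+
      have h1: "pp D (j-1) = pp D j + (if j \<in> D then 1 else 0)" by (rule pp_step[OF fD(1) j3])
      have h2: "pp D' (j-1) = pp D' j + (if j \<in> D' then 1 else 0)" by (rule pp_step[OF fD(2) j3])
      have h3: "pp D (j-1) = pp D' (j-1)" by (rule pe[OF j1])
      have h4: "pp D j = pp D' j" by (rule pe[OF j2])
      have "(if j \<in> D then 1 else 0::nat) = (if j \<in> D' then 1 else 0)"
        using h1 h2 h3 h4 by linarith
      then show ?thesis by (cases "j \<in> D"; cases "j \<in> D'") simp_all
    next
      case False then show ?thesis using D D' by auto
    qed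
  qed
qed

lemma count_bound:
  assumes "n \<ge> 1"
  shows "2 ^ (n - 1) \<le> card {P. unique_config n P}"
proof -
  have fin: "finite {P. unique_config n P}"
  proof (rule finite_subset)
    show "{P. unique_config n P} \<subseteq> {xs. set xs \<subseteq> {0..n} \<and> length xs = n}"
    proof
      fix P assume "P \<in> {P. unique_config n P}"
      then have c: "is_config n P" unfolding unique_config_def by simp
      have "set P \<subseteq> {0..n}"
      proof
        fix x assume "x \<in> set P"
        then obtain i where i: "i < length P" "P ! i = x" by (auto simp: in_set_conv_nth)
        then have si: "Suc i \<in> {1..n}" using c unfolding is_config_def by auto
        then have "P ! (Suc i - 1) \<in> {1..n - Suc i + 1}" using c unfolding is_config_def by blast
        then have "P ! i \<le> n" using si by auto
        then show "x \<in> {0..n}" using i by auto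
      qed
      then show "P \<in> {xs. set xs \<subseteq> {0..n} \<and> length xs = n}" using c unfolding is_config_def by simp
    qed
    show "finite {xs. set xs \<subseteq> {0..n} \<and> length xs = n}" by (rule finite_lists_length_eq) simp
  qed
  have sub: "cfg n ` Pow {2..n} \<subseteq> {P. unique_config n P}"
    using cfg_unique by auto
  have c0: "card (cfg n ` Pow {2..n}) = card (Pow {2..n})" by (rule card_image[OF cfg_inj])
  have c2: "card (Pow {2..n}) = 2 ^ (n - 1)" by (simp add: card_Pow)
  have "card (cfg n ` Pow {2..n}) \<le> card {P. unique_config n P}" by (rule card_mono[OF fin sub])
  then show ?thesis unfolding c0 c2 .
qed

theorem theorem3:
  shows "(\<lambda>n::nat. real (card {P. unique_config n P})) \<in> \<Omega>(\<lambda>n. (2::real) ^ n)"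
proof -
  have "(\<lambda>n. (2::real) ^ n) \<in> O(\<lambda>n::nat. real (card {P. unique_config n P}))"
  proof (rule landau_o.bigI[of 2])
    show "(0::real) < 2" by simp
    show "\<forall>\<^sub>F n in at_top. norm ((2::real) ^ n) \<le> 2 * norm (real (card {P. unique_config n P}))"
      using eventually_ge_at_top[of "1::nat"]
    proof eventually_elim
      case (elim n)
      have "(2::real) ^ n = 2 * 2 ^ (n - 1)" using elim by (cases n) auto
      also have "\<dots> \<le> 2 * real (card {P. unique_config n P})"
        using count_bound[OF elim] by (simp add: of_nat_le_iff[symmetric])
      finally show ?case by simp
    qed
  qed
  then show ?thesis by (simp add: bigomega_iff_bigo)
qed

end
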